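(* (Injectivity of the surface-aligned representation.) For $\mathbf{x}\in\mathbb{R}^3\setminus\mathbb{I}$ define $\mathcal{X}(\mathbf{x})=(\mathbf{s}_c,h)\in\mathbb{R}^4$, where $\mathbf{s}$ is the dispersed projection of $\mathbf{x}$ onto the posed mesh $\mathcal{M}$, $h$ is the signed height ($h=\|\mathbf{x}-\mathbf{s}\|$ if $\mathbf{x}$ is outside the region enclosed by $\mathcal{M}$, $h=-\|\mathbf{x}-\mathbf{s}\|$ if inside), and $\mathbf{s}_c$ is the point of the T-pose mesh $\mathcal{M}_c$ with the same face and the same barycentric coordinates as $\mathbf{s}$. Then the map $\mathbf{x}\mapsto\mathcal{X}(\mathbf{x})$ is injective on $\mathbb{R}^3\setminus\mathbb{I}$.
   Context: Let $\mathcal{M}$ be a triangle mesh in $\mathbb{R}^3$ that is watertight (closed, without self-intersections) and has no faces of zero area. Each face $T=(\mathbf{v}_1,\mathbf{v}_2,\mathbf{v}_3)$ has an outward unit face normal $\mathbf{n}_T$; each vertex $\mathbf{v}$ has a unit vertex normal $\mathbf{n}_{\mathbf{v}}$, and for every face $T$ and every vertex $\mathbf{v}$ of $T$, $\langle \mathbf{n}_{\mathbf{v}},\mathbf{n}_T\rangle>0$. $\mathcal{M}_c$ is a second watertight triangle mesh without zero-area faces having the same combinatorial structure (same faces, vertex indexing) as $\mathcal{M}$ but different vertex positions; for $\mathbf{s}=\sum_i\alpha_i\mathbf{v}_i$ in face $T$ of $\mathcal{M}$, $\mathbf{s}_c=\sum_i\alpha_i\mathbf{v}^c_i$ in the corresponding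 face of $\mathcal{M}_c$. Vertex normal alignment of a face $T$ with orientation $\sigma\in\{+1,-1\}$: put $\mathbf{m}_T=\sigma\mathbf{n}_T$; for each $i\in\{1,2,3\}$ let $j,k$ be the other two indices, $\mathbf{e}_1=\mathbf{v}_j-\mathbf{v}_i$, $\mathbf{e}_2=\mathbf{v}_k-\mathbf{v}_i$, $\mathbf{m}_i=\sigma\mathbf{n}_{\mathbf{v}_i}$, write the in-plane part $\mathbf{m}_i-\langle\mathbf{m}_i,\mathbf{m}_T\rangle\mathbf{m}_T=c_1\mathbf{e}_1+c_2\mathbf{e}_2$, and define the aligned normal $\hat{\mathbf{n}}^{T,\sigma}_i=(\mathbf{m}_i-\max(0,c_1)\mathbf{e}_1-\max(0,c_2)\mathbf{e}_2)/\|\mathbf{m}_i-\max(0,c_1)\mathbf{e}_1-\max(0,c_2)\mathbf{e}_2\|$. (Aligned normals depend on the face $T$, not only on the vertex.) Barycentric interpolated projection onto $T$ with orientation $\sigma$: for $\mathbf{x}$ with $l:=\langle\mathbf{x}-\mathbf{v}_1,\sigma\mathbf{n}_T\rangle\ge 0$, set $\mathbf{v}_i'=\mathbf{v}_i+\big(l/\langle\hat{\mathbf{n}}^{T,\sigma}_i,\sigma\mathbf{n}_T\rangle\big)\hat{\mathbf{n}}^{T,\sigma}_i$, forming the parallel triangle $T'=(\mathbf{v}_1',\mathbf{v}_2',\mathbf{v}_3')$ in the plane through $\mathbf{x}$ parallel to $T$. If $\mathbf{x}\in T'$, i.e. $\mathbf{x}=\sum_i\alpha_i\mathbf{v}_i'$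 with $\alpha_i\ge0$, $\sum_i\alpha_i=1$, the projection is $\mathbf{s}_T=\sum_i\alpha_i\mathbf{v}_i$. Dispersed projection of $\mathbf{x}$ (with $\sigma=+1$ if $\mathbf{x}$ is outside the region enclosed by $\mathcal{M}$ and $\sigma=-1$ if inside): (1) compute the nearest point $\tilde{\mathbf{s}}$ of $\mathcal{M}$ to $\mathbf{x}$; (2) let $\mathcal{T}$ be the set of faces containing $\tilde{\mathbf{s}}$; (3) apply vertex normal alignment with orientation $\sigma$ to each $T\in\mathcal{T}$; (4) discard those $T$ with $\mathbf{x}\notin T'$; (5) compute $\mathbf{s}_T$ for the remaining $T$; (6) let $\mathbf{s}$ be the $\mathbf{s}_T$ nearest to $\mathbf{x}$. It is assumed that for every $\mathbf{x}\in\mathbb{R}^3$ at least one face survives step (4), so $\mathbf{s}$ is defined. Exceptional set: for a face $T$, orientation $\sigma$, and $\mathbf{a}^{T,\sigma}_i=\hat{\mathbf{n}}^{T,\sigma}_i/\langle\hat{\mathbf{n}}^{T,\sigma}_i,\sigma\mathbf{n}_T\rangle$, let $\mathbb{I}$ be the union over all faces $T$, both $\sigma$, and all pairs of distinct vertices $\mathbf{v}_i,\mathbf{v}_j$ of $T$ of the bilinear surfaces $\{(1-u)\mathbf{v}_i+u\mathbf{v}_j+t((1-u)\mathbf{a}^{T,\sigma}_i+u\mathbf{a}^{T,\sigma}_j): u\in[0,1],t\ge0\}$ (a set of Lebesgue measure zero). For $\mathbf{x}\notin\mathbb{I}$, the dispersed projection $\mathbf{s}$ lies in the relative interior of a face.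 *)

theory Defs
  imports "HOL-Analysis.Analysis" "HOL-Analysis.Cross3"
begin

text \<open>A triangle mesh is given by a vertex position map V :: nat => real^3
 and a set F of faces; a face is an ordered (oriented) triple of vertex indices.
 The posed mesh M is (V, F), the T-pose mesh M_c is (Vc, F) (same combinatorics).\<close>

type_synonym face = "nat \<times> nat \<times> nat"

fun fidx :: "face \<Rightarrow> nat \<Rightarrow> nat" where
  "fidx (a, b, c) i = (if i = 0 then a else if i = 1 then b else c)"

definition fverts :: "face \<Rightarrow> nat set" where
  "fverts T = {fidx T 0, fidx T 1, fidx T 2}"

definition mverts :: "face set \<Rightarrow> nat set" where
  "mverts F = (\<Union>T\<in>F. fverts T)"

definition dedges :: "face \<Rightarrow> (nat \<times> nat) set" where
  "dedges T = {(fidx T 0, fidx T 1), (fidx T 1, fidx T 2), (fidx T 2, fidx T 0)}"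

definition tri :: "(nat \<Rightarrow> real^3) \<Rightarrow> face \<Rightarrow> (real^3) set" where
  "tri V T = convex hull {V (fidx T 0), V (fidx T 1), V (fidx T 2)}"

definition surface :: "(nat \<Rightarrow> real^3) \<Rightarrow> face set \<Rightarrow> (real^3) set" where
  "surface V F = (\<Union>T\<in>F. tri V T)"

definition fnormal :: "(nat \<Rightarrow> real^3) \<Rightarrow> face \<Rightarrow> real^3" where
  "fnormal V T = (let n = cross3 (V (fidx T 1) - V (fidx T 0)) (V (fidx T 2) - V (fidx T 0))
                  in (1 / norm n) *\<^sub>R n)"

definition watertight :: "(nat \<Rightarrow> real^3) \<Rightarrow> face set \<Rightarrow> bool" where
  "watertight V F \<longleftrightarrow>
     finite F \<and> F \<noteq> {} \<and>
     inj_on V (mverts F) \<and>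
     (\<forall>T\<in>F. card (fverts T) = 3) \<and>
     \<comment> \<open>no faces of zero area\<close>
     (\<forall>T\<in>F. cross3 (V (fidx T 1) - V (fidx T 0)) (V (fidx T 2) - V (fidx T 0)) \<noteq> 0) \<and>
     \<comment> \<open>closed and consistently oriented: every directed edge is matched by exactly one
        face containing the reversed edge, and no directed edge lies in two faces\<close>
     (\<forall>T\<in>F. \<forall>(p, q)\<in>dedges T. \<exists>!T'. T' \<in> F \<and> (q, p) \<in> dedges T') \<and>
     (\<forall>T\<in>F. \<forall>T'\<in>F. T \<noteq> T' \<longrightarrow> dedges T \<inter> dedges T' = {}) \<and>
     \<comment> \<open>no self-intersections: distinct faces meet only in the convex hull of their
        common vertices\<close>
     (\<forall>T\<in>F. \<forall>T'\<in>F. T \<noteq> T' \<longrightarrow>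
        tri V T \<inter> tri V T' = convex hull (V ` (fverts T \<inter> fverts T')))"

text \<open>The face normals point outward: into the unbounded complementary region
  (library notion outside; the region enclosed by the mesh is the library notion inside).\<close>
definition outward_normals :: "(nat \<Rightarrow> real^3) \<Rightarrow> face set \<Rightarrow> bool" where
  "outward_normals V F \<longleftrightarrow>
     (\<forall>T\<in>F. \<forall>p\<in>rel_interior (tri V T). \<exists>e>0. \<forall>t. 0 < t \<and> t < e \<longrightarrow>
        p + t *\<^sub>R fnormal V T \<in> outside (surface V F))"

definition vertex_normals_ok :: "(nat \<Rightarrow> real^3) \<Rightarrow> face set \<Rightarrow> (nat \<Rightarrow> real^3) \<Rightarrow> bool" where
  "vertex_normals_ok V F N \<longleftrightarrow>
     (\<forall>v\<in>mverts F. norm (N v) = 1) \<and>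
     (\<forall>T\<in>F. \<forall>i<3. inner (N (fidx T i)) (fnormal V T) > 0)"

definition orient :: "(nat \<Rightarrow> real^3) \<Rightarrow> face set \<Rightarrow> real^3 \<Rightarrow> real" where
  "orient V F x = (if x \<in> inside (surface V F) then -1 else 1)"

definition aligned_normal ::
  "(nat \<Rightarrow> real^3) \<Rightarrow> (nat \<Rightarrow> real^3) \<Rightarrow> face \<Rightarrow> real \<Rightarrow> nat \<Rightarrow> real^3" where
  "aligned_normal V N T \<sigma> i =
     (let vi = V (fidx T i); vj = V (fidx T ((i + 1) mod 3)); vk = V (fidx T ((i + 2) mod 3));
          mT = \<sigma> *\<^sub>R fnormal V T; e1 = vj - vi; e2 = vk - vi;
          m = \<sigma> *\<^sub>R N (fidx T i);
          w = m - inner m mT *\<^sub>R mT;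
          c = (THE c :: real \<times> real. w = fst c *\<^sub>R e1 + snd c *\<^sub>R e2);
          u = m - max 0 (fst c) *\<^sub>R e1 - max 0 (snd c) *\<^sub>R e2
      in (1 / norm u) *\<^sub>R u)"

definition avec :: "(nat \<Rightarrow> real^3) \<Rightarrow> (nat \<Rightarrow> real^3) \<Rightarrow> face \<Rightarrow> real \<Rightarrow> nat \<Rightarrow> real^3" where
  "avec V N T \<sigma> i =
     (1 / inner (aligned_normal V N T \<sigma> i) (\<sigma> *\<^sub>R fnormal V T)) *\<^sub>R aligned_normal V N T \<sigma> i"

definition lheight :: "(nat \<Rightarrow> real^3) \<Rightarrow> face \<Rightarrow> real \<Rightarrow> real^3 \<Rightarrow> real" where
  "lheight V T \<sigma> x = inner (x - V (fidx T 0)) (\<sigma> *\<^sub>R fnormal V T)"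

text \<open>Vertices of the parallel triangle T' through x.\<close>
definition pvert :: "(nat \<Rightarrow> real^3) \<Rightarrow> (nat \<Rightarrow> real^3) \<Rightarrow> face \<Rightarrow> real \<Rightarrow> real^3 \<Rightarrow> nat \<Rightarrow> real^3" where
  "pvert V N T \<sigma> x i =
     V (fidx T i) + (lheight V T \<sigma> x / inner (aligned_normal V N T \<sigma> i) (\<sigma> *\<^sub>R fnormal V T))
                      *\<^sub>R aligned_normal V N T \<sigma> i"

definition bary :: "(nat \<Rightarrow> real) \<Rightarrow> bool" where
  "bary \<alpha> \<longleftrightarrow> \<alpha> 0 \<ge> 0 \<and> \<alpha> 1 \<ge> 0 \<and> \<alpha> 2 \<ge> 0 \<and> \<alpha> 0 + \<alpha> 1 + \<alpha> 2 = 1"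

definition bpoint :: "(nat \<Rightarrow> real^3) \<Rightarrow> face \<Rightarrow> (nat \<Rightarrow> real) \<Rightarrow> real^3" where
  "bpoint V T \<alpha> = \<alpha> 0 *\<^sub>R V (fidx T 0) + \<alpha> 1 *\<^sub>R V (fidx T 1) + \<alpha> 2 *\<^sub>R V (fidx T 2)"

text \<open>x lies in the parallel triangle T' with barycentric coordinates \<alpha> (requires l \<ge> 0);
  the barycentric interpolated projection is then bpoint V T \<alpha>.\<close>
definition in_parallel ::
  "(nat \<Rightarrow> real^3) \<Rightarrow> (nat \<Rightarrow> real^3) \<Rightarrow> face \<Rightarrow> real \<Rightarrow> real^3 \<Rightarrow> (nat \<Rightarrow> real) \<Rightarrow> bool" where
  "in_parallel V N T \<sigma> x \<alpha> \<longleftrightarrow>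
     lheight V T \<sigma> x \<ge> 0 \<and> bary \<alpha> \<and>
     x = \<alpha> 0 *\<^sub>R pvert V N T \<sigma> x 0 + \<alpha> 1 *\<^sub>R pvert V N T \<sigma> x 1 + \<alpha> 2 *\<^sub>R pvert V N T \<sigma> x 2"

definition nearest_point :: "(real^3) set \<Rightarrow> real^3 \<Rightarrow> real^3 \<Rightarrow> bool" where
  "nearest_point S x p \<longleftrightarrow> p \<in> S \<and> (\<forall>q\<in>S. dist x p \<le> dist x q)"

text \<open>Dispersed projection (as a relation, allowing any admissible choice in case of ties):
  the output is the face T and barycentric coordinates \<alpha>, i.e. s = bpoint V T \<alpha>.\<close>
definition dispersed_proj ::
  "(nat \<Rightarrow> real^3) \<Rightarrow> face set \<Rightarrow> (nat \<Rightarrow> real^3) \<Rightarrow> real^3 \<Rightarrow> face \<Rightarrow> (nat \<Rightarrow> real) \<Rightarrow> bool" where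
  "dispersed_proj V F N x T \<alpha> \<longleftrightarrow>
     (let \<sigma> = orient V F x in
      \<exists>st. nearest_point (surface V F) x st \<and>
        T \<in> F \<and> st \<in> tri V T \<and> in_parallel V N T \<sigma> x \<alpha> \<and>
        (\<forall>T'\<in>F. \<forall>\<beta>. st \<in> tri V T' \<and> in_parallel V N T' \<sigma> x \<beta> \<longrightarrow>
            dist x (bpoint V T \<alpha>) \<le> dist x (bpoint V T' \<beta>)))"

definition exceptional :: "(nat \<Rightarrow> real^3) \<Rightarrow> face set \<Rightarrow> (nat \<Rightarrow> real^3) \<Rightarrow> (real^3) set" where
  "exceptional V F N =
     (\<Union>T\<in>F. \<Union>\<sigma>\<in>{1, -1}. \<Union>i\<in>{0,1,2::nat}. \<Union>j\<in>{0,1,2::nat} - {i}.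
        {(1 - u) *\<^sub>R V (fidx T i) + u *\<^sub>R V (fidx T j)
           + t *\<^sub>R ((1 - u) *\<^sub>R avec V N T \<sigma> i + u *\<^sub>R avec V N T \<sigma> j) | u t.
         0 \<le> u \<and> u \<le> 1 \<and> 0 \<le> t})"

definition sa_rep ::
  "(nat \<Rightarrow> real^3) \<Rightarrow> (nat \<Rightarrow> real^3) \<Rightarrow> face set \<Rightarrow> real^3 \<Rightarrow> face \<Rightarrow> (nat \<Rightarrow> real) \<Rightarrow> (real^3) \<times> real" where
  "sa_rep V Vc F x T \<alpha> =
     (bpoint Vc T \<alpha>,
      (if x \<in> inside (surface V F) then - norm (x - bpoint V T \<alpha>) else norm (x - bpoint V T \<alpha>)))"

end

theory Submission
  imports Defs
begin


lemma wt_card: assumes "watertight V F" "T \<in> F" shows "card (fverts T) = 3"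
proof -
  have "\<forall>T\<in>F. card (fverts T) = 3" using assms(1) unfolding watertight_def by (elim conjE) assumption
  thus ?thesis using assms(2) by blast
qed

lemma wt_cross: assumes "watertight V F" "T \<in> F"
  shows "cross3 (V (fidx T 1) - V (fidx T 0)) (V (fidx T 2) - V (fidx T 0)) \<noteq> 0"
proof -
  have "\<forall>T\<in>F. cross3 (V (fidx T 1) - V (fidx T 0)) (V (fidx T 2) - V (fidx T 0)) \<noteq> 0"
    using assms(1) unfolding watertight_def by (elim conjE) assumption
  thus ?thesis using assms(2) by blast
qed

lemma wt_dis: assumes "watertight V F" "T \<in> F" "T' \<in> F" "T \<noteq> T'" shows "dedges T \<inter> dedges T' = {}"
proof -
  have "\<forall>T\<in>F. \<forall>T'\<in>F. T \<noteq> T' \<longrightarrow> dedges T \<inter> dedges T' = {}"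
    using assms(1) unfolding watertight_def by (elim conjE) assumption
  thus ?thesis using assms(2-4) by blast
qed

lemma wt_int: assumes "watertight V F" "T \<in> F" "T' \<in> F" "T \<noteq> T'"
  shows "tri V T \<inter> tri V T' = convex hull (V ` (fverts T \<inter> fverts T'))"
proof -
  have "\<forall>T\<in>F. \<forall>T'\<in>F. T \<noteq> T' \<longrightarrow> tri V T \<inter> tri V T' = convex hull (V ` (fverts T \<inter> fverts T'))"
    using assms(1) unfolding watertight_def by (elim conjE) assumption
  thus ?thesis using assms(2-4) by blast
qed

lemma aff_unique:
  fixes A B C :: "real^3"
  assumes nz: "cross3 (B - A) (C - A) \<noteq> 0" and s: "a0+a1+a2 = b0+b1+b2"
    and e: "a0 *\<^sub>R A + a1 *\<^sub>R B + a2 *\<^sub>R C = b0 *\<^sub>R A + b1 *\<^sub>R B + b2 *\<^sub>R C"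
  shows "a0=b0 \<and> a1=b1 \<and> a2=b2"
proof -
  have a0: "a0 - b0 = -((a1-b1)+(a2-b2))" using s by simp
  have "(a0 - b0) *\<^sub>R A + (a1-b1) *\<^sub>R B + (a2-b2) *\<^sub>R C = 0" using e by (simp add: algebra_simps)
  hence z: "(a1-b1) *\<^sub>R (B - A) + (a2-b2) *\<^sub>R (C - A) = 0" unfolding a0 by (simp add: algebra_simps)
  have "cross3 ((a1-b1) *\<^sub>R (B - A) + (a2-b2) *\<^sub>R (C - A)) (C - A) = 0" using z by simp
  hence "(a1-b1) *\<^sub>R cross3 (B - A) (C - A) = 0"
    by (simp add: cross_add_left cross_mult_left)
  hence 1: "a1 = b1" using nz by simp
  have "cross3 (B - A) ((a1-b1) *\<^sub>R (B - A) + (a2-b2) *\<^sub>R (C - A)) = 0" using z by simp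
  hence "(a2-b2) *\<^sub>R cross3 (B - A) (C - A) = 0"
    by (simp add: cross_add_right cross_mult_right)
  hence 2: "a2 = b2" using nz by simp
  show ?thesis using 1 2 s by simp
qed

lemma plane_orth:
  assumes "\<alpha> 0 + \<alpha> 1 + \<alpha> 2 = 1"
  shows "inner (bpoint V T \<alpha> - V (fidx T 0)) (fnormal V T) = 0"
proof -
  let ?A = "V (fidx T 0)" and ?B = "V (fidx T 1)" and ?C = "V (fidx T 2)"
  have a0: "\<alpha> 0 = 1 - \<alpha> 1 - \<alpha> 2" using assms by simp
  have "bpoint V T \<alpha> - ?A = \<alpha> 1 *\<^sub>R (?B - ?A) + \<alpha> 2 *\<^sub>R (?C - ?A)"
    unfolding bpoint_def a0 by (simp add: algebra_simps)
  moreover have "inner (?B - ?A) (cross3 (?B - ?A) (?C - ?A)) = 0"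
     "inner (?C - ?A) (cross3 (?B - ?A) (?C - ?A)) = 0" by (simp_all add: dot_cross_self)
  ultimately show ?thesis unfolding fnormal_def Let_def
    by (simp add: inner_add_left inner_diff_left)
qed

definition wvec where "wvec V N T \<sigma> \<alpha> = \<alpha> 0 *\<^sub>R avec V N T \<sigma> 0 + \<alpha> 1 *\<^sub>R avec V N T \<sigma> 1 + \<alpha> 2 *\<^sub>R avec V N T \<sigma> 2"

lemma pvert_avec: "pvert V N T \<sigma> x i = V (fidx T i) + lheight V T \<sigma> x *\<^sub>R avec V N T \<sigma> i"
  unfolding pvert_def avec_def by simp

lemma par_eq:
  assumes "in_parallel V N T \<sigma> x \<alpha>"
  shows "x = bpoint V T \<alpha> + lheight V T \<sigma> x *\<^sub>R wvec V N T \<sigma> \<alpha>"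
  using assms unfolding in_parallel_def pvert_avec bpoint_def wvec_def
  by (simp add: algebra_simps)

lemma par_exc:
  assumes "in_parallel V N T \<sigma> x \<alpha>" "T \<in> F" "\<sigma> \<in> {1,-1}" "\<alpha> 0 = 0 \<or> \<alpha> 1 = 0 \<or> \<alpha> 2 = 0"
  shows "x \<in> exceptional V F N"
proof -
  obtain L where L: "lheight V T \<sigma> x = L" by blast
  have ip: "L \<ge> 0 \<and> bary \<alpha> \<and> x = \<alpha> 0 *\<^sub>R (V (fidx T 0) + L *\<^sub>R avec V N T \<sigma> 0)
     + \<alpha> 1 *\<^sub>R (V (fidx T 1) + L *\<^sub>R avec V N T \<sigma> 1) + \<alpha> 2 *\<^sub>R (V (fidx T 2) + L *\<^sub>R avec V N T \<sigma> 2)"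
    using assms(1) unfolding in_parallel_def pvert_avec L .
  have l: "L \<ge> 0" using ip by (rule conjunct1)
  have b: "bary \<alpha>" using ip by (rule conjunct1[OF conjunct2])
  have x: "x = \<alpha> 0 *\<^sub>R (V (fidx T 0) + L *\<^sub>R avec V N T \<sigma> 0)
     + \<alpha> 1 *\<^sub>R (V (fidx T 1) + L *\<^sub>R avec V N T \<sigma> 1) + \<alpha> 2 *\<^sub>R (V (fidx T 2) + L *\<^sub>R avec V N T \<sigma> 2)"
    using ip by (rule conjunct2[OF conjunct2])
  have key: "x \<in> exceptional V F N" if ij: "i \<in> {0,1,2::nat}" "j \<in> {0,1,2::nat} - {i}"
    and xe: "x = (1 - u) *\<^sub>R V (fidx T i) + u *\<^sub>R V (fidx T j)
           + L *\<^sub>R ((1 - u) *\<^sub>R avec V N T \<sigma> i + u *\<^sub>R avec V N T \<sigma> j)" and u: "0 \<le> u" "u \<le> 1" for i j u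
  proof -
    have mem: "x \<in> {(1 - u) *\<^sub>R V (fidx T i) + u *\<^sub>R V (fidx T j)
           + t *\<^sub>R ((1 - u) *\<^sub>R avec V N T \<sigma> i + u *\<^sub>R avec V N T \<sigma> j) | u t.
         0 \<le> u \<and> u \<le> 1 \<and> 0 \<le> t}"
      apply (rule CollectI) apply (rule exI[of _ u]) apply (rule exI[of _ L])
      by (intro conjI xe u l)
    show ?thesis unfolding exceptional_def
      by (rule UN_I[OF assms(2)], rule UN_I[OF assms(3)], rule UN_I[OF ij(1)], rule UN_I[OF ij(2)], rule mem)
  qed
  from assms(4) show ?thesis
  proof (elim disjE)
    assume a: "\<alpha> 0 = 0"
    have u: "1 - \<alpha> 2 = \<alpha> 1" using b a by (simp add: bary_def)
    show ?thesis
      apply (rule key[of 1 2 "\<alpha> 2"])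
      using b apply (simp_all add: bary_def u)
      apply (subst x) apply (simp add: a a[unfolded One_nat_def] u u[unfolded One_nat_def] scaleR_add_right mult.commute)
      done
  next
    assume a: "\<alpha> 1 = 0"
    have u: "1 - \<alpha> 2 = \<alpha> 0" using b a by (simp add: bary_def)
    show ?thesis
      apply (rule key[of 0 2 "\<alpha> 2"])
      using b apply (simp_all add: bary_def u)
      apply (subst x) apply (simp add: a a[unfolded One_nat_def] u u[unfolded One_nat_def] scaleR_add_right mult.commute)
      done
  next
    assume a: "\<alpha> 2 = 0"
    have u: "1 - \<alpha> 1 = \<alpha> 0" using b a by (simp add: bary_def)
    show ?thesis
      apply (rule key[of 0 1 "\<alpha> 1"])
      using b apply (simp_all add: bary_def u)
      apply (subst x) apply (simp add: a a[unfolded One_nat_def] u u[unfolded One_nat_def] scaleR_add_right mult.commute)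
      done
  qed
qed

lemma crg: fixes p q :: "real^3" shows "cross3 (-p) (q - p) = - cross3 p q" "cross3 (p - q) (-q) = - cross3 p q"
  by (simp_all only: cross_minus_left cross_minus_right Cross3.right_diff_distrib Cross3.left_diff_distrib cross_refl minus_zero diff_zero)

lemma cr: fixes A B C :: "real^3" shows
  "cross3 (C-A) (B-A) = - cross3 (B-A) (C-A)"
  "cross3 (A-B) (C-B) = - cross3 (B-A) (C-A)"
  "cross3 (B-C) (A-C) = - cross3 (B-A) (C-A)"
proof -
  show "cross3 (C-A) (B-A) = - cross3 (B-A) (C-A)" by (rule cross_skew)
  have "cross3 (A-B) (C-B) = cross3 (-(B-A)) ((C-A) - (B-A))" by simp
  also have "... = - cross3 (B-A) (C-A)" by (rule crg(1))
  finally show "cross3 (A-B) (C-B) = - cross3 (B-A) (C-A)" .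
  have "cross3 (B-C) (A-C) = cross3 ((B-A) - (C-A)) (-(C-A))" by simp
  also have "... = - cross3 (B-A) (C-A)" by (rule crg(2))
  finally show "cross3 (B-C) (A-C) = - cross3 (B-A) (C-A)" .
qed

lemma fn_neg: fixes A B C :: "real^3" assumes "T = (a,b,c)" and "T' = (a,c,b) \<or> T' = (b,a,c) \<or> T' = (c,b,a)"
  shows "fnormal V T' = - fnormal V T"
proof -
  have n1: "cross3 (V c - V a) (V b - V a) = - cross3 (V b - V a) (V c - V a)" by (rule cr(1))
  have n2: "cross3 (V a - V b) (V c - V b) = - cross3 (V b - V a) (V c - V a)" by (rule cr(2))
  have n3: "cross3 (V b - V c) (V a - V c) = - cross3 (V b - V a) (V c - V a)" by (rule cr(3))
  from assms(2) show ?thesis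
  proof (elim disjE)
    assume "T' = (a,c,b)" thus ?thesis using assms(1) by (simp add: fnormal_def Let_def n1)
  next
    assume "T' = (b,a,c)" thus ?thesis using assms(1) by (simp add: fnormal_def Let_def n2)
  next
    assume "T' = (c,b,a)" thus ?thesis using assms(1) by (simp add: fnormal_def Let_def n3)
  qed
qed

lemma same_verts:
  assumes w: "watertight V F" and vn: "vertex_normals_ok V F N" and TF: "T \<in> F" "T' \<in> F"
    and ne: "T \<noteq> T'" and fv: "fverts T = fverts T'"
  shows False
proof -
  obtain a b c where T: "T = (a,b,c)" by (cases T) auto
  obtain a' b' c' where T': "T' = (a',b',c')" by (cases T') auto
  have c3: "card {a,b,c} = 3" "card {a',b',c'} = 3" using wt_card[OF w TF(1)] wt_card[OF w TF(2)] unfolding T T' fverts_def by simp_all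
  have d: "a \<noteq> b" "a \<noteq> c" "b \<noteq> c" using c3(1) by (auto simp: card_insert_if split: if_splits)
  have d': "a' \<noteq> b'" "a' \<noteq> c'" "b' \<noteq> c'" using c3(2) by (auto simp: card_insert_if split: if_splits)
  have dis: "dedges T \<inter> dedges T' = {}" by (rule wt_dis[OF w TF ne])
  have eq: "{a,b,c} = {a',b',c'}" using fv T T' by (simp add: fverts_def)
  have mem: "a' \<in> {a,b,c}" "b' \<in> {a,b,c}" "c' \<in> {a,b,c}" by (simp_all add: eq)
  have abT: "(a,b) \<in> dedges T" "(b,c) \<in> dedges T" "(c,a) \<in> dedges T" unfolding T dedges_def by simp_all
  have r1: "T' \<noteq> (b,c,a)"
  proof
    assume "T' = (b,c,a)"
    hence "(a,b) \<in> dedges T'" unfolding dedges_def by simp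
    thus False using abT dis by blast
  qed
  have r2: "T' \<noteq> (c,a,b)"
  proof
    assume "T' = (c,a,b)"
    hence "(a,b) \<in> dedges T'" unfolding dedges_def by simp
    thus False using abT dis by blast
  qed
  have cases: "T' = (a,c,b) \<or> T' = (b,a,c) \<or> T' = (c,b,a)"
    using mem d d' r1 r2 ne unfolding T T' by auto
  have fnn: "fnormal V T' = - fnormal V T" by (rule fn_neg[OF T cases])
  have "\<exists>j<3. fidx T' j = a" using cases by (elim disjE) (rule exI[where x=0], simp, rule exI[where x=1], simp, rule exI[where x=2], simp)
  then obtain j where j: "j < 3" "fidx T' j = a" by blast
  have "inner (N a) (fnormal V T) > 0" using vn TF T unfolding vertex_normals_ok_def by (metis fidx.simps zero_less_numeral)
  moreover have "inner (N a) (fnormal V T') > 0" using vn TF j unfolding vertex_normals_ok_def by metis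
  ultimately show False using fnn by simp
qed



lemma height_det:
  assumes px: "in_parallel V N T \<sigma> x \<alpha>" and py: "in_parallel V N T \<sigma> y \<alpha>"
    and nn: "norm (x - bpoint V T \<alpha>) = norm (y - bpoint V T \<alpha>)"
  shows "x = y"
proof -
  let ?s = "bpoint V T \<alpha>" and ?w = "wvec V N T \<sigma> \<alpha>" and ?n = "\<sigma> *\<^sub>R fnormal V T"
  let ?lx = "lheight V T \<sigma> x" and ?ly = "lheight V T \<sigma> y"
  have sum: "\<alpha> 0 + \<alpha> 1 + \<alpha> 2 = 1" using px unfolding in_parallel_def bary_def by blast
  have x: "x = ?s + ?lx *\<^sub>R ?w" by (rule par_eq[OF px])
  have y: "y = ?s + ?ly *\<^sub>R ?w" by (rule par_eq[OF py])
  have lx0: "?lx \<ge> 0" using px unfolding in_parallel_def by blast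
  have ly0: "?ly \<ge> 0" using py unfolding in_parallel_def by blast
  have orth: "inner (?s - V (fidx T 0)) ?n = 0" using plane_orth[OF sum] by simp
  have hl: "l = l * inner ?w ?n" if "l = inner (?s + l *\<^sub>R ?w - V (fidx T 0)) ?n" for l
  proof -
    have eq1: "?s + l *\<^sub>R ?w - V (fidx T 0) = (?s - V (fidx T 0)) + l *\<^sub>R ?w" by simp
    have "l = inner ((?s - V (fidx T 0)) + l *\<^sub>R ?w) ?n" using that unfolding eq1 .
    also have "... = inner (?s - V (fidx T 0)) ?n + l * inner ?w ?n" by (simp only: inner_add_left inner_scaleR_left)
    also have "... = l * inner ?w ?n" using orth by (simp only: add_0_left)
    finally show ?thesis .
  qed
  have hgen: "l = l * inner ?w ?n" if z: "z = ?s + l *\<^sub>R ?w" and hz: "lheight V T \<sigma> z = l" for z l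
  proof (rule hl)
    have "l = inner (z - V (fidx T 0)) ?n" using hz unfolding lheight_def by (rule sym)
    thus "l = inner (?s + l *\<^sub>R ?w - V (fidx T 0)) ?n" by (subst (asm) z)
  qed
  obtain lx where lx: "?lx = lx" by blast
  obtain ly where ly: "?ly = ly" by blast
  have x': "x = ?s + lx *\<^sub>R ?w" using x unfolding lx .
  have y': "y = ?s + ly *\<^sub>R ?w" using y unfolding ly .
  have hx: "lx = lx * inner ?w ?n" by (rule hgen[OF x' lx])
  have hy: "ly = ly * inner ?w ?n" by (rule hgen[OF y' ly])
  have lx0': "lx \<ge> 0" using lx0 unfolding lx .
  have ly0': "ly \<ge> 0" using ly0 unfolding ly .
  have nx: "norm (x - ?s) = lx * norm ?w" using lx0' unfolding x' by simp
  have ny: "norm (y - ?s) = ly * norm ?w" using ly0' unfolding y' by simp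
  show ?thesis
  proof (cases "lx = 0 \<or> ly = 0")
    case True
    hence "lx = 0 \<and> ly = 0"
    proof
      assume h: "lx = 0"
      have "norm (x - ?s) = 0" using nx h by simp
      hence "ly * norm ?w = 0" using nn ny by simp
      hence "ly = 0 \<or> ?w = 0" by simp
      hence "ly = 0" using hy by auto
      thus ?thesis using h by simp
    next
      assume h: "ly = 0"
      have "norm (y - ?s) = 0" using ny h by simp
      hence "lx * norm ?w = 0" using nn nx by simp
      hence "lx = 0 \<or> ?w = 0" by simp
      hence "lx = 0" using hx by auto
      thus ?thesis using h by simp
    qed
    then show ?thesis unfolding x' y' by simp
  next
    case False
    hence "inner ?w ?n = 1" using hx by auto
    hence "?w \<noteq> 0" by auto
    hence "lx = ly" using nx ny nn by simp
    then show ?thesis unfolding x' y' by simp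
  qed
qed

lemma face_eq:
  assumes w: "watertight V F" and wc: "watertight Vc F" and vn: "vertex_normals_ok V F N"
    and TF: "T \<in> F" "T' \<in> F" and pos: "\<alpha> 0 > 0" "\<alpha> 1 > 0" "\<alpha> 2 > 0"
    and ba: "bary \<alpha>" and bb: "bary \<beta>" and eq: "bpoint Vc T \<alpha> = bpoint Vc T' \<beta>"
  shows "T = T'"
proof (rule ccontr)
  assume ne: "T \<noteq> T'"
  let ?p = "bpoint Vc T \<alpha>"
  define C where "C = fverts T \<inter> fverts T'"
  have inT: "?p \<in> tri Vc T" unfolding tri_def convex_hull_3 bpoint_def using ba by (fastforce simp: bary_def)
  have inT'0: "bpoint Vc T' \<beta> \<in> tri Vc T'" unfolding tri_def convex_hull_3 bpoint_def using bb by (fastforce simp: bary_def)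
  have inT': "?p \<in> tri Vc T'" by (subst eq) (rule inT'0)
  have pC: "?p \<in> convex hull (Vc ` C)" proof -
    have "tri Vc T \<inter> tri Vc T' = convex hull (Vc ` (fverts T \<inter> fverts T'))"
      by (rule wt_int[OF wc TF ne])
    thus ?thesis using inT inT' unfolding C_def by blast
  qed
  have nz: "cross3 (Vc (fidx T 1) - Vc (fidx T 0)) (Vc (fidx T 2) - Vc (fidx T 0)) \<noteq> 0"
  proof -
    have "\<forall>T\<in>F. cross3 (Vc (fidx T 1) - Vc (fidx T 0)) (Vc (fidx T 2) - Vc (fidx T 0)) \<noteq> 0"
      using wc unfolding watertight_def by (elim conjE) assumption
    thus ?thesis using TF(1) by blast
  qed
  have CT: "C \<noteq> fverts T"
  proof
    assume h: "C = fverts T"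
    have "fverts T = fverts T'"
    proof (rule card_subset_eq)
      show "finite (fverts T')" by (simp add: fverts_def)
      show "fverts T \<subseteq> fverts T'" using h C_def by blast
      show "card (fverts T) = card (fverts T')" proof -
        have "\<forall>T\<in>F. card (fverts T) = 3" using w unfolding watertight_def by (elim conjE) assumption
        thus ?thesis using TF by simp
      qed
    qed
    thus False using same_verts[OF w vn TF ne] by blast
  qed
  have seg: "\<exists>u. 0\<le>u \<and> u\<le>1 \<and> ?p = (1-u) *\<^sub>R Vc (fidx T i) + u *\<^sub>R Vc (fidx T j)"
    if "C \<subseteq> {fidx T i, fidx T j}" for i j
  proof -
    have "convex hull (Vc ` C) \<subseteq> convex hull {Vc (fidx T i), Vc (fidx T j)}"
      by (rule hull_mono) (use that in auto)
    hence "?p \<in> closed_segment (Vc (fidx T i)) (Vc (fidx T j))" using pC segment_convex_hull by blast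
    thus ?thesis by (simp add: in_segment)
  qed
  have "C \<subseteq> fverts T" unfolding C_def by blast
  hence "C \<subseteq> {fidx T 1, fidx T 2} \<or> C \<subseteq> {fidx T 0, fidx T 2} \<or> C \<subseteq> {fidx T 0, fidx T 1}"
    using CT unfolding fverts_def by blast
  then show False
  proof (elim disjE)
    assume "C \<subseteq> {fidx T 1, fidx T 2}"
    then obtain u where "?p = (1-u) *\<^sub>R Vc (fidx T 1) + u *\<^sub>R Vc (fidx T 2)" using seg by blast
    hence "?p = 0 *\<^sub>R Vc (fidx T 0) + (1-u) *\<^sub>R Vc (fidx T 1) + u *\<^sub>R Vc (fidx T 2)" by simp
    from aff_unique[OF nz _ this[unfolded bpoint_def]] ba pos show False by (simp add: bary_def)
  next
    assume "C \<subseteq> {fidx T 0, fidx T 2}"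
    then obtain u where "?p = (1-u) *\<^sub>R Vc (fidx T 0) + u *\<^sub>R Vc (fidx T 2)" using seg by blast
    hence "?p = (1-u) *\<^sub>R Vc (fidx T 0) + 0 *\<^sub>R Vc (fidx T 1) + u *\<^sub>R Vc (fidx T 2)" by simp
    from aff_unique[OF nz _ this[unfolded bpoint_def]] ba pos show False by (simp add: bary_def)
  next
    assume "C \<subseteq> {fidx T 0, fidx T 1}"
    then obtain u where "?p = (1-u) *\<^sub>R Vc (fidx T 0) + u *\<^sub>R Vc (fidx T 1)" using seg by blast
    hence "?p = (1-u) *\<^sub>R Vc (fidx T 0) + u *\<^sub>R Vc (fidx T 1) + 0 *\<^sub>R Vc (fidx T 2)" by simp
    from aff_unique[OF nz _ this[unfolded bpoint_def]] ba pos show False by (simp add: bary_def)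
  qed
qed

theorem mainTheorem4:
  fixes V Vc N :: "nat \<Rightarrow> real^3" and F :: "face set"
  assumes "watertight V F"
    and "outward_normals V F"
    and "vertex_normals_ok V F N"
    and "watertight Vc F"
    and "\<forall>x st. nearest_point (surface V F) x st \<longrightarrow>
           (\<exists>T\<in>F. \<exists>\<alpha>. st \<in> tri V T \<and> in_parallel V N T (orient V F x) x \<alpha>)"
    and "x \<notin> exceptional V F N" and "y \<notin> exceptional V F N"
    and "dispersed_proj V F N x T \<alpha>" and "dispersed_proj V F N y T' \<beta>"
    and "sa_rep V Vc F x T \<alpha> = sa_rep V Vc F y T' \<beta>"
  shows "x = y"
proof -
  note w = assms(1) and vn = assms(3) and wc = assms(4)
  have dx: "T \<in> F" "in_parallel V N T (orient V F x) x \<alpha>"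
    using assms(8) unfolding dispersed_proj_def Let_def by blast+
  have dy: "T' \<in> F" "in_parallel V N T' (orient V F y) y \<beta>"
    using assms(9) unfolding dispersed_proj_def Let_def by blast+
  have sx: "orient V F x \<in> {1,-1}" by (simp add: orient_def)
  have ba: "bary \<alpha>" using dx(2) unfolding in_parallel_def by blast
  have bb: "bary \<beta>" using dy(2) unfolding in_parallel_def by blast
  have "\<not> (\<alpha> 0 = 0 \<or> \<alpha> 1 = 0 \<or> \<alpha> 2 = 0)" using par_exc[OF dx(2) dx(1) sx] assms(6) by blast
  hence pos: "\<alpha> 0 > 0" "\<alpha> 1 > 0" "\<alpha> 2 > 0" using ba by (auto simp: bary_def less_le)
  have sa: "bpoint Vc T \<alpha> = bpoint Vc T' \<beta>"
    and hh: "(if x \<in> inside (surface V F) then - norm (x - bpoint V T \<alpha>) else norm (x - bpoint V T \<alpha>)) =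
             (if y \<in> inside (surface V F) then - norm (y - bpoint V T' \<beta>) else norm (y - bpoint V T' \<beta>))"
    using assms(10) unfolding sa_rep_def by simp_all
  have TT: "T = T'" by (rule face_eq[OF w wc vn dx(1) dy(1) pos ba bb sa])
  have nz: "cross3 (Vc (fidx T 1) - Vc (fidx T 0)) (Vc (fidx T 2) - Vc (fidx T 0)) \<noteq> 0"
  proof -
    have "\<forall>T\<in>F. cross3 (Vc (fidx T 1) - Vc (fidx T 0)) (Vc (fidx T 2) - Vc (fidx T 0)) \<noteq> 0"
      using wc unfolding watertight_def by (elim conjE) assumption
    thus ?thesis using dx(1) by blast
  qed
  have "\<alpha> 0 = \<beta> 0 \<and> \<alpha> 1 = \<beta> 1 \<and> \<alpha> 2 = \<beta> 2"
    by (rule aff_unique[OF nz]) (use ba bb sa TT in \<open>simp_all add: bary_def bpoint_def\<close>)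
  hence ab: "\<beta> 0 = \<alpha> 0" "\<beta> 1 = \<alpha> 1" "\<beta> 2 = \<alpha> 2" by simp_all
  have py: "in_parallel V N T (orient V F y) y \<alpha>" using dy(2) unfolding TT in_parallel_def bary_def ab by blast
  have sb: "bpoint V T' \<beta> = bpoint V T \<alpha>" using ab TT by (simp add: bpoint_def)
  show ?thesis
  proof (cases "(x \<in> inside (surface V F)) = (y \<in> inside (surface V F))")
    case True
    hence so: "orient V F y = orient V F x" by (simp add: orient_def)
    have "norm (x - bpoint V T \<alpha>) = norm (y - bpoint V T \<alpha>)" using hh True sb by (auto split: if_splits)
    thus ?thesis using height_det[OF dx(2)] py so by simp
  next
    case False
    have e: "norm (x - bpoint V T \<alpha>) = - norm (y - bpoint V T \<alpha>) \<or> - norm (x - bpoint V T \<alpha>) = norm (y - bpoint V T \<alpha>)"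
      using hh sb False by (auto split: if_splits)
    have "norm (x - bpoint V T \<alpha>) = 0" "norm (y - bpoint V T \<alpha>) = 0"
      using e norm_ge_zero[of "x - bpoint V T \<alpha>"] norm_ge_zero[of "y - bpoint V T \<alpha>"] by linarith+
    thus ?thesis by simp
  qed
qed

end
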